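(* Let $R$ be a finitely generated $\mathbb{C}$-algebra which is a domain, and let $r,s,r',s'\in R$. For $a,b\in R$ put $A_{a,b}:=R[U,V]/(aU-bV-1)$. If $\operatorname{rad}(r,s)=\operatorname{rad}(r',s')$ (radicals of the ideals generated by $r,s$ and by $r',s'$), then $A_{r,s}[T]\cong A_{r',s'}[T]$, where $T$ is an indeterminate. *)

theory Defs
  imports Complex_Main "HOL-Algebra.Algebra"
begin

definition complex_ring :: "complex ring" where
  "complex_ring = \<lparr>carrier = UNIV, monoid.mult = (\<lambda>x y. x * y), one = 1, ring.zero = 0, ring.add = (\<lambda>x y. x + y)\<rparr>"

definition fg_C_algebra :: "('a, 'b) ring_scheme \<Rightarrow> (complex \<Rightarrow> 'a) \<Rightarrow> bool" where
  "fg_C_algebra R \<phi> \<longleftrightarrow> cring R \<and> \<phi> \<in> ring_hom complex_ring R \<and>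
     (\<exists>S. finite S \<and> S \<subseteq> carrier R \<and> generate_ring R (\<phi> ` UNIV \<union> S) = carrier R)"

definition radical :: "('a, 'b) ring_scheme \<Rightarrow> 'a set \<Rightarrow> 'a set" where
  "radical R I = {x \<in> carrier R. \<exists>n::nat. x [^]\<^bsub>R\<^esub> n \<in> I}"

definition polyUV :: "('a, 'b) ring_scheme \<Rightarrow> (nat \<Rightarrow> 'a, nat \<Rightarrow> nat \<Rightarrow> 'a) up_ring" where
  "polyUV R = UP (UP R)"

definition constUV :: "('a, 'b) ring_scheme \<Rightarrow> 'a \<Rightarrow> nat \<Rightarrow> nat \<Rightarrow> 'a" where
  "constUV R c = monom (UP (UP R)) (monom (UP R) c 0) 0"

definition varU :: "('a, 'b) ring_scheme \<Rightarrow> nat \<Rightarrow> nat \<Rightarrow> 'a" where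
  "varU R = monom (UP (UP R)) (monom (UP R) \<one>\<^bsub>R\<^esub> 1) 0"

definition varV :: "('a, 'b) ring_scheme \<Rightarrow> nat \<Rightarrow> nat \<Rightarrow> 'a" where
  "varV R = monom (UP (UP R)) \<one>\<^bsub>UP R\<^esub> 1"

definition relUV :: "('a, 'b) ring_scheme \<Rightarrow> 'a \<Rightarrow> 'a \<Rightarrow> nat \<Rightarrow> nat \<Rightarrow> 'a" where
  "relUV R a b = (constUV R a \<otimes>\<^bsub>polyUV R\<^esub> varU R) \<ominus>\<^bsub>polyUV R\<^esub>
                 (constUV R b \<otimes>\<^bsub>polyUV R\<^esub> varV R) \<ominus>\<^bsub>polyUV R\<^esub> \<one>\<^bsub>polyUV R\<^esub>"

definition A_ring :: "('a, 'b) ring_scheme \<Rightarrow> 'a \<Rightarrow> 'a \<Rightarrow> (nat \<Rightarrow> nat \<Rightarrow> 'a) set ring" where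
  "A_ring R a b = polyUV R Quot (Idl\<^bsub>polyUV R\<^esub> {relUV R a b})"

definition A_of :: "('a, 'b) ring_scheme \<Rightarrow> 'a \<Rightarrow> 'a \<Rightarrow> 'a \<Rightarrow> (nat \<Rightarrow> nat \<Rightarrow> 'a) set" where
  "A_of R a b x = (Idl\<^bsub>polyUV R\<^esub> {relUV R a b}) +>\<^bsub>polyUV R\<^esub> constUV R x"

definition AT_ring :: "('a, 'b) ring_scheme \<Rightarrow> 'a \<Rightarrow> 'a \<Rightarrow> _" where
  "AT_ring R a b = UP (A_ring R a b)"

definition AT_struct :: "('a, 'b) ring_scheme \<Rightarrow> (complex \<Rightarrow> 'a) \<Rightarrow> 'a \<Rightarrow> 'a \<Rightarrow> complex \<Rightarrow> nat \<Rightarrow> (nat \<Rightarrow> nat \<Rightarrow> 'a) set" where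
  "AT_struct R \<phi> a b z = monom (AT_ring R a b) (A_of R a b (\<phi> z)) 0"

definition C_alg_iso :: "('c, 'd) ring_scheme \<Rightarrow> (complex \<Rightarrow> 'c) \<Rightarrow> ('e, 'f) ring_scheme \<Rightarrow> (complex \<Rightarrow> 'e) \<Rightarrow> bool" where
  "C_alg_iso S \<sigma> S' \<sigma>' \<longleftrightarrow> (\<exists>h \<in> ring_iso S S'. \<forall>z. h (\<sigma> z) = \<sigma>' z)"

end

theory Submission
  imports Defs
begin


lemma cring_UP: "cring R \<Longrightarrow> cring (UP R)"
proof -
  assume "cring R"
  then interpret UP_cring R "UP R" by (simp add: UP_cring_def)
  show ?thesis by (rule UP_cring)
qed

lemma hom_minus:
  assumes "cring R" "cring S" "h \<in> ring_hom R S" "x \<in> carrier R" "y \<in> carrier R"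
  shows "h (x \<ominus>\<^bsub>R\<^esub> y) = h x \<ominus>\<^bsub>S\<^esub> h y"
proof -
  interpret ring_hom_cring R S h using assms by (simp add: ring_hom_cringI)
  show ?thesis using assms by (simp add: R.minus_eq S.minus_eq)
qed

lemma hom_zero:
  assumes "cring R" "cring S" "h \<in> ring_hom R S"
  shows "h \<zero>\<^bsub>R\<^esub> = \<zero>\<^bsub>S\<^esub>"
proof -
  interpret ring_hom_cring R S h using assms by (simp add: ring_hom_cringI)
  show ?thesis by simp
qed

lemma const_hom: "cring R \<Longrightarrow> (\<lambda>a. monom (UP R) a 0) \<in> ring_hom R (UP R)"
proof -
  assume "cring R"
  then interpret UP_cring R "UP R" by (simp add: UP_cring_def)
  show ?thesis by (rule const_ring_hom)
qed

lemma monom_closed': "cring R \<Longrightarrow> a \<in> carrier R \<Longrightarrow> monom (UP R) a n \<in> carrier (UP R)"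
  by (rule UP_ring.monom_closed) (auto simp: UP_ring_def cring.axioms(1))

lemma UP_eval_hom:
  assumes "cring R" "cring S" "h \<in> ring_hom R S" "s \<in> carrier S"
  shows "eval R S h s \<in> ring_hom (UP R) S"
    and "\<And>c. c \<in> carrier R \<Longrightarrow> eval R S h s (monom (UP R) c 0) = h c"
    and "eval R S h s (monom (UP R) \<one>\<^bsub>R\<^esub> 1) = s"
proof -
  have pre: "UP_pre_univ_prop R S h"
    using assms by (intro UP_pre_univ_propI)
  show "eval R S h s \<in> ring_hom (UP R) S"
    using UP_pre_univ_prop.eval_ring_hom[OF pre assms(4)] .
  show "\<And>c. c \<in> carrier R \<Longrightarrow> eval R S h s (monom (UP R) c 0) = h c"
    using UP_pre_univ_prop.eval_const[OF pre assms(4)] .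
  show "eval R S h s (monom (UP R) \<one>\<^bsub>R\<^esub> 1) = s"
    using UP_pre_univ_prop.eval_monom1[OF pre assms(4)] .
qed

lemma UP_hom_eq:
  assumes "cring R" "cring S" "Phi \<in> ring_hom (UP R) S" "Psi \<in> ring_hom (UP R) S"
    and "Phi (monom (UP R) \<one>\<^bsub>R\<^esub> 1) = Psi (monom (UP R) \<one>\<^bsub>R\<^esub> 1)"
    and "\<And>c. c \<in> carrier R \<Longrightarrow> Phi (monom (UP R) c 0) = Psi (monom (UP R) c 0)"
    and "p \<in> carrier (UP R)"
  shows "Phi p = Psi p"
proof -
  define h where "h = Phi \<circ> (\<lambda>a. monom (UP R) a 0)"
  have h: "h \<in> ring_hom R S" unfolding h_def
    by (rule ring_hom_trans[OF const_hom[OF assms(1)] assms(3)])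
  have pre: "UP_pre_univ_prop R S h"
    using assms h by (intro UP_pre_univ_propI)
  have cU: "cring (UP R)" using assms(1) by (rule cring_UP)
  have s: "Phi (monom (UP R) \<one>\<^bsub>R\<^esub> 1) \<in> carrier S"
    apply (rule ring_hom_closed[OF assms(3)])
    using assms(1) by (simp add: monom_closed' cring.axioms(1) ring.ring_simprules(6))
  have 1: "monom (UP R) \<one>\<^bsub>R\<^esub> (Suc 0) = monom (UP R) \<one>\<^bsub>R\<^esub> 1" by simp
  show ?thesis
  proof (rule UP_pre_univ_prop.UP_hom_unique[OF pre, where s = "Phi (monom (UP R) \<one>\<^bsub>R\<^esub> 1)"])
    show "ring_hom_cring (UP R) S Phi" by (rule ring_hom_cringI[OF cU assms(2,3)])
    show "ring_hom_cring (UP R) S Psi" by (rule ring_hom_cringI[OF cU assms(2,4)])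
    show "Phi (monom (UP R) \<one>\<^bsub>R\<^esub> (Suc 0)) = Phi (monom (UP R) \<one>\<^bsub>R\<^esub> 1)" by (simp only: 1)
    show "Psi (monom (UP R) \<one>\<^bsub>R\<^esub> (Suc 0)) = Phi (monom (UP R) \<one>\<^bsub>R\<^esub> 1)" by (simp only: 1 assms(5))
    show "\<And>r. r \<in> carrier R \<Longrightarrow> Phi (monom (UP R) r 0) = h r" by (simp add: h_def)
    show "\<And>r. r \<in> carrier R \<Longrightarrow> Psi (monom (UP R) r 0) = h r" by (simp add: h_def assms(6))
  qed (use assms s in auto)
qed


lemma cring_P2: "cring R \<Longrightarrow> cring (polyUV R)"
  unfolding polyUV_def by (intro cring_UP)

lemma constUV_eq: "constUV R = (\<lambda>a. monom (UP (UP R)) a 0) \<circ> (\<lambda>a. monom (UP R) a 0)"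
  by (auto simp: constUV_def fun_eq_iff)

lemma constUV_hom: "cring R \<Longrightarrow> constUV R \<in> ring_hom R (polyUV R)"
  unfolding constUV_eq polyUV_def
  by (rule ring_hom_trans[OF const_hom const_hom]) (auto intro: cring_UP)

lemma varU_closed: "cring R \<Longrightarrow> varU R \<in> carrier (polyUV R)"
  unfolding varU_def polyUV_def
  by (intro monom_closed' cring_UP) (auto intro: cring.axioms(1) ring.ring_simprules(6))

lemma varV_closed: "cring R \<Longrightarrow> varV R \<in> carrier (polyUV R)"
  unfolding varV_def polyUV_def
  by (intro monom_closed' cring_UP) (auto intro: cring.axioms(1) ring.ring_simprules(6) cring_UP)

lemma constUV_closed: "cring R \<Longrightarrow> c \<in> carrier R \<Longrightarrow> constUV R c \<in> carrier (polyUV R)"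
  by (rule ring_hom_closed[OF constUV_hom])

lemma relUV_closed:
  assumes "cring R" "a \<in> carrier R" "b \<in> carrier R"
  shows "relUV R a b \<in> carrier (polyUV R)"
proof -
  interpret P: cring "polyUV R" by (rule cring_P2[OF assms(1)])
  show ?thesis unfolding relUV_def
    by (intro P.minus_closed P.m_closed P.one_closed constUV_closed varU_closed varV_closed assms)
qed

lemma UV_eval:
  assumes "cring R" "cring S" "f \<in> ring_hom R S" "u \<in> carrier S" "v \<in> carrier S"
  defines "g \<equiv> eval (UP R) S (eval R S f u) v"
  shows "g \<in> ring_hom (polyUV R) S"
    and "\<And>c. c \<in> carrier R \<Longrightarrow> g (constUV R c) = f c"
    and "g (varU R) = u" and "g (varV R) = v"
proof -
  have h1: "eval R S f u \<in> ring_hom (UP R) S" using UP_eval_hom(1)[OF assms(1-4)] .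
  have cU: "cring (UP R)" by (rule cring_UP[OF assms(1)])
  show "g \<in> ring_hom (polyUV R) S" unfolding g_def polyUV_def
    by (rule UP_eval_hom(1)[OF cU assms(2) h1 assms(5)])
  show "\<And>c. c \<in> carrier R \<Longrightarrow> g (constUV R c) = f c"
  proof -
    fix c assume c: "c \<in> carrier R"
    have m: "monom (UP R) c 0 \<in> carrier (UP R)" by (rule monom_closed'[OF assms(1) c])
    show "g (constUV R c) = f c" unfolding g_def constUV_def
      by (simp add: UP_eval_hom(2)[OF cU assms(2) h1 assms(5) m] UP_eval_hom(2)[OF assms(1-4) c])
  qed
  interpret Rr: cring R by fact
  have m1: "monom (UP R) \<one>\<^bsub>R\<^esub> 1 \<in> carrier (UP R)" by (rule monom_closed'[OF assms(1) Rr.one_closed])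
  show "g (varU R) = u"
    unfolding g_def varU_def
    using UP_eval_hom(2)[OF cU assms(2) h1 assms(5) m1] UP_eval_hom(3)[OF assms(1-4)] by simp
  show "g (varV R) = v"
    unfolding g_def varV_def
    by (rule UP_eval_hom(3)[OF cU assms(2) h1 assms(5)])
qed

lemma UV_hom_eq:
  assumes "cring R" "cring S" "Phi \<in> ring_hom (polyUV R) S" "Psi \<in> ring_hom (polyUV R) S"
    and "\<And>c. c \<in> carrier R \<Longrightarrow> Phi (constUV R c) = Psi (constUV R c)"
    and "Phi (varU R) = Psi (varU R)" and "Phi (varV R) = Psi (varV R)"
    and "p \<in> carrier (polyUV R)"
  shows "Phi p = Psi p"
proof -
  have cU: "cring (UP R)" by (rule cring_UP[OF assms(1)])
  have h: "Phi \<circ> (\<lambda>a. monom (UP (UP R)) a 0) \<in> ring_hom (UP R) S"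
          "Psi \<circ> (\<lambda>a. monom (UP (UP R)) a 0) \<in> ring_hom (UP R) S"
    using assms(3,4) unfolding polyUV_def
    by (auto intro: ring_hom_trans[OF const_hom[OF cU]])
  have inner: "Phi (monom (UP (UP R)) q 0) = Psi (monom (UP (UP R)) q 0)" if q: "q \<in> carrier (UP R)" for q
    using UP_hom_eq[OF assms(1,2) h _ _ q] assms(5,6) unfolding varU_def constUV_def by simp
  show ?thesis
    using UP_hom_eq[OF cU assms(2) assms(3,4)[unfolded polyUV_def] _ _ assms(8)[unfolded polyUV_def]]
      assms(7) inner unfolding varV_def by simp
qed

lemma quot_elem:
  assumes "ideal I P" "C \<in> carrier (P Quot I)"
  shows "\<exists>x\<in>carrier P. C = I +>\<^bsub>P\<^esub> x"
  using assms(2) unfolding FactRing_def A_RCOSETS_def' by auto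

lemma quot_lift:
  assumes I: "ideal I P" and S: "ring S" and g: "g \<in> ring_hom P S"
    and ker: "\<And>i. i \<in> I \<Longrightarrow> g i = \<zero>\<^bsub>S\<^esub>"
  shows "(\<lambda>C. the_elem (g ` C)) \<in> ring_hom (P Quot I) S"
    and "\<And>x. x \<in> carrier P \<Longrightarrow> the_elem (g ` (I +>\<^bsub>P\<^esub> x)) = g x"
proof -
  interpret ideal I P by (rule I)
  have img: "g ` (I +>\<^bsub>P\<^esub> x) = {g x}" if x: "x \<in> carrier P" for x
  proof -
    have "g (i \<oplus>\<^bsub>P\<^esub> x) = g x" if "i \<in> I" for i
      using that x ker ring_hom_add[OF g] S by (simp add: ring.ring_simprules(8) ring_hom_closed[OF g])
    moreover have "\<zero>\<^bsub>P\<^esub> \<in> I" by simp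
    ultimately show ?thesis unfolding a_r_coset_def' using x by auto
  qed
  show ev: "\<And>x. x \<in> carrier P \<Longrightarrow> the_elem (g ` (I +>\<^bsub>P\<^esub> x)) = g x"
    using img by simp
  have pi: "(+>\<^bsub>P\<^esub>) I \<in> ring_hom P (P Quot I)" by (rule rcos_ring_hom)
  show "(\<lambda>C. the_elem (g ` C)) \<in> ring_hom (P Quot I) S"
  proof (rule ring_hom_memI)
    fix C assume "C \<in> carrier (P Quot I)"
    then obtain x where "x \<in> carrier P" "C = I +>\<^bsub>P\<^esub> x" using quot_elem[OF I] by blast
    then show "the_elem (g ` C) \<in> carrier S" using ev ring_hom_closed[OF g] by simp
  next
    fix C D assume "C \<in> carrier (P Quot I)" "D \<in> carrier (P Quot I)"
    then obtain x y where xy: "x \<in> carrier P" "C = I +>\<^bsub>P\<^esub> x" "y \<in> carrier P" "D = I +>\<^bsub>P\<^esub> y"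
      using quot_elem[OF I] by metis
    show "the_elem (g ` (C \<otimes>\<^bsub>P Quot I\<^esub> D)) = the_elem (g ` C) \<otimes>\<^bsub>S\<^esub> the_elem (g ` D)"
      using xy ring_hom_mult[OF pi, of x y, symmetric] ev ring_hom_mult[OF g] by simp
    show "the_elem (g ` (C \<oplus>\<^bsub>P Quot I\<^esub> D)) = the_elem (g ` C) \<oplus>\<^bsub>S\<^esub> the_elem (g ` D)"
      using xy ring_hom_add[OF pi, of x y, symmetric] ev ring_hom_add[OF g] by simp
  next
    show "the_elem (g ` \<one>\<^bsub>P Quot I\<^esub>) = \<one>\<^bsub>S\<^esub>"
      using ring_hom_one[OF pi] ev[of "\<one>\<^bsub>P\<^esub>"] ring_hom_one[OF g] by (metis one_closed)
  qed
qed


definition clsU :: "('a, 'b) ring_scheme \<Rightarrow> 'a \<Rightarrow> 'a \<Rightarrow> (nat \<Rightarrow> nat \<Rightarrow> 'a) set" where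
  "clsU R a b = (Idl\<^bsub>polyUV R\<^esub> {relUV R a b}) +>\<^bsub>polyUV R\<^esub> varU R"
definition clsV :: "('a, 'b) ring_scheme \<Rightarrow> 'a \<Rightarrow> 'a \<Rightarrow> (nat \<Rightarrow> nat \<Rightarrow> 'a) set" where
  "clsV R a b = (Idl\<^bsub>polyUV R\<^esub> {relUV R a b}) +>\<^bsub>polyUV R\<^esub> varV R"

definition liftA where
  "liftA R S f u v = (\<lambda>C. the_elem (eval (UP R) S (eval R S f u) v ` C))"

lemma A_ideal:
  assumes "cring R" "a \<in> carrier R" "b \<in> carrier R"
  shows "ideal (Idl\<^bsub>polyUV R\<^esub> {relUV R a b}) (polyUV R)"
proof -
  interpret P: cring "polyUV R" by (rule cring_P2[OF assms(1)])
  show ?thesis by (rule P.genideal_ideal) (use relUV_closed[OF assms] in auto)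
qed

lemma A_cring:
  assumes "cring R" "a \<in> carrier R" "b \<in> carrier R"
  shows "cring (A_ring R a b)"
  unfolding A_ring_def by (rule ideal.quotient_is_cring[OF A_ideal[OF assms] cring_P2[OF assms(1)]])

lemma A_proj:
  assumes "cring R" "a \<in> carrier R" "b \<in> carrier R"
  shows "(+>\<^bsub>polyUV R\<^esub>) (Idl\<^bsub>polyUV R\<^esub> {relUV R a b}) \<in> ring_hom (polyUV R) (A_ring R a b)"
  unfolding A_ring_def by (rule ideal.rcos_ring_hom[OF A_ideal[OF assms]])

lemma A_of_hom:
  assumes "cring R" "a \<in> carrier R" "b \<in> carrier R"
  shows "A_of R a b \<in> ring_hom R (A_ring R a b)"
proof -
  have "A_of R a b = (+>\<^bsub>polyUV R\<^esub>) (Idl\<^bsub>polyUV R\<^esub> {relUV R a b}) \<circ> constUV R"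
    by (auto simp: A_of_def fun_eq_iff)
  then show ?thesis using ring_hom_trans[OF constUV_hom[OF assms(1)] A_proj[OF assms]] by simp
qed

lemma clsU_closed:
  assumes "cring R" "a \<in> carrier R" "b \<in> carrier R"
  shows "clsU R a b \<in> carrier (A_ring R a b)"
  unfolding clsU_def by (rule ring_hom_closed[OF A_proj[OF assms] varU_closed[OF assms(1)]])

lemma clsV_closed:
  assumes "cring R" "a \<in> carrier R" "b \<in> carrier R"
  shows "clsV R a b \<in> carrier (A_ring R a b)"
  unfolding clsV_def by (rule ring_hom_closed[OF A_proj[OF assms] varV_closed[OF assms(1)]])

lemma minus_one_eq:
  fixes S (structure)
  assumes "cring S" "x \<in> carrier S" "x \<ominus>\<^bsub>S\<^esub> \<one>\<^bsub>S\<^esub> = \<zero>\<^bsub>S\<^esub>"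
  shows "x = \<one>\<^bsub>S\<^esub>"
proof -
  interpret cring S by fact
  have "x = (x \<ominus> \<one>) \<oplus> \<one>" using assms(2) by algebra
  then show ?thesis using assms(3) by simp
qed

lemma eq_minus_one:
  assumes "cring S" "x \<in> carrier S" "x = \<one>\<^bsub>S\<^esub>"
  shows "x \<ominus>\<^bsub>S\<^esub> \<one>\<^bsub>S\<^esub> = \<zero>\<^bsub>S\<^esub>"
proof -
  interpret cring S by fact
  show ?thesis using assms(3) by (simp add: r_neg minus_eq)
qed

lemma hom_rel:
  assumes "cring R" "a \<in> carrier R" "b \<in> carrier R" "cring S"
    and g: "g \<in> ring_hom (polyUV R) S"
  shows "g (relUV R a b) = g (constUV R a) \<otimes>\<^bsub>S\<^esub> g (varU R) \<ominus>\<^bsub>S\<^esub> g (constUV R b) \<otimes>\<^bsub>S\<^esub> g (varV R) \<ominus>\<^bsub>S\<^esub> \<one>\<^bsub>S\<^esub>"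
proof -
  interpret P: cring "polyUV R" by (rule cring_P2[OF assms(1)])
  note cl = constUV_closed[OF assms(1)] varU_closed[OF assms(1)] varV_closed[OF assms(1)]
  show ?thesis unfolding relUV_def
    using cl assms
    by (simp add: hom_minus[OF P.cring_axioms assms(4) g] ring_hom_mult[OF g] ring_hom_one[OF g])
qed

lemma A_rel:
  assumes "cring R" "a \<in> carrier R" "b \<in> carrier R"
  shows "A_of R a b a \<otimes>\<^bsub>A_ring R a b\<^esub> clsU R a b \<ominus>\<^bsub>A_ring R a b\<^esub> A_of R a b b \<otimes>\<^bsub>A_ring R a b\<^esub> clsV R a b = \<one>\<^bsub>A_ring R a b\<^esub>"
proof -
  let ?I = "Idl\<^bsub>polyUV R\<^esub> {relUV R a b}"
  let ?A = "A_ring R a b"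
  interpret I: ideal ?I "polyUV R" by (rule A_ideal[OF assms])
  interpret A: cring ?A by (rule A_cring[OF assms])
  have rI: "relUV R a b \<in> ?I" by (rule I.genideal_self') (rule relUV_closed[OF assms])
  have "?I +>\<^bsub>polyUV R\<^esub> relUV R a b = \<zero>\<^bsub>?A\<^esub>"
    using I.a_rcos_const[OF rI] by (simp add: A_ring_def FactRing_def)
  then have "A_of R a b a \<otimes>\<^bsub>?A\<^esub> clsU R a b \<ominus>\<^bsub>?A\<^esub> A_of R a b b \<otimes>\<^bsub>?A\<^esub> clsV R a b \<ominus>\<^bsub>?A\<^esub> \<one>\<^bsub>?A\<^esub> = \<zero>\<^bsub>?A\<^esub>"
    using hom_rel[OF assms A.cring_axioms A_proj[OF assms]] by (simp add: A_of_def clsU_def clsV_def)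
  then show ?thesis
    by (intro minus_one_eq[OF A.cring_axioms])
       (auto intro!: A.minus_closed A.m_closed ring_hom_closed[OF A_of_hom[OF assms]] clsU_closed[OF assms] clsV_closed[OF assms] assms)
qed

lemma liftA:
  assumes R: "cring R" "a \<in> carrier R" "b \<in> carrier R"
    and S: "cring S" and f: "f \<in> ring_hom R S" and uv: "u \<in> carrier S" "v \<in> carrier S"
    and rel: "f a \<otimes>\<^bsub>S\<^esub> u \<ominus>\<^bsub>S\<^esub> f b \<otimes>\<^bsub>S\<^esub> v = \<one>\<^bsub>S\<^esub>"
  shows "liftA R S f u v \<in> ring_hom (A_ring R a b) S"
    and "\<And>x. x \<in> carrier R \<Longrightarrow> liftA R S f u v (A_of R a b x) = f x"
    and "liftA R S f u v (clsU R a b) = u"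
    and "liftA R S f u v (clsV R a b) = v"
proof -
  let ?I = "Idl\<^bsub>polyUV R\<^esub> {relUV R a b}"
  let ?g = "eval (UP R) S (eval R S f u) v"
  note g = UV_eval[OF R(1) S f uv]
  interpret P: cring "polyUV R" by (rule cring_P2[OF R(1)])
  interpret Sc: cring S by (rule S)
  have grel: "?g (relUV R a b) = \<zero>\<^bsub>S\<^esub>"
  proof -
    have "?g (relUV R a b) = f a \<otimes>\<^bsub>S\<^esub> u \<ominus>\<^bsub>S\<^esub> f b \<otimes>\<^bsub>S\<^esub> v \<ominus>\<^bsub>S\<^esub> \<one>\<^bsub>S\<^esub>"
      using hom_rel[OF R S g(1)] g(2)[OF R(2)] g(2)[OF R(3)] g(3,4) by simp
    also have "\<dots> = \<one>\<^bsub>S\<^esub> \<ominus>\<^bsub>S\<^esub> \<one>\<^bsub>S\<^esub>" by (simp only: rel)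
    also have "\<dots> = \<zero>\<^bsub>S\<^esub>" by (simp add: Sc.r_neg Sc.minus_eq)
    finally show ?thesis .
  qed
  have kid: "ideal (a_kernel (polyUV R) S ?g) (polyUV R)"
    by (rule ring_hom_ring.kernel_is_ideal[OF ring_hom_ringI2[OF P.ring_axioms Sc.ring_axioms g(1)]])
  have sub: "?I \<subseteq> a_kernel (polyUV R) S ?g"
    by (rule P.genideal_minimal[OF kid])
       (use grel relUV_closed[OF R] in \<open>auto simp: a_kernel_def'\<close>)
  have ker: "\<And>i. i \<in> ?I \<Longrightarrow> ?g i = \<zero>\<^bsub>S\<^esub>" using sub by (auto simp: a_kernel_def')
  note L = quot_lift[OF A_ideal[OF R] Sc.ring_axioms g(1) ker]
  show "liftA R S f u v \<in> ring_hom (A_ring R a b) S"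
    using L(1) by (simp add: liftA_def A_ring_def)
  show "\<And>x. x \<in> carrier R \<Longrightarrow> liftA R S f u v (A_of R a b x) = f x"
    using L(2) g(2) constUV_closed[OF R(1)] by (simp add: liftA_def A_of_def)
  show "liftA R S f u v (clsU R a b) = u"
    using L(2) g(3) varU_closed[OF R(1)] by (simp add: liftA_def clsU_def)
  show "liftA R S f u v (clsV R a b) = v"
    using L(2) g(4) varV_closed[OF R(1)] by (simp add: liftA_def clsV_def)
qed

lemma A_hom_eq:
  assumes R: "cring R" "a \<in> carrier R" "b \<in> carrier R" and S: "cring S"
    and h: "Phi \<in> ring_hom (A_ring R a b) S" "Psi \<in> ring_hom (A_ring R a b) S"
    and e: "\<And>x. x \<in> carrier R \<Longrightarrow> Phi (A_of R a b x) = Psi (A_of R a b x)"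
      "Phi (clsU R a b) = Psi (clsU R a b)" "Phi (clsV R a b) = Psi (clsV R a b)"
    and C: "C \<in> carrier (A_ring R a b)"
  shows "Phi C = Psi C"
proof -
  let ?I = "Idl\<^bsub>polyUV R\<^esub> {relUV R a b}"
  obtain x where x: "x \<in> carrier (polyUV R)" "C = ?I +>\<^bsub>polyUV R\<^esub> x"
    using quot_elem[OF A_ideal[OF R] C[unfolded A_ring_def]] by blast
  have "(Phi \<circ> (+>\<^bsub>polyUV R\<^esub>) ?I) x = (Psi \<circ> (+>\<^bsub>polyUV R\<^esub>) ?I) x"
    by (rule UV_hom_eq[OF R(1) S ring_hom_trans[OF A_proj[OF R] h(1)] ring_hom_trans[OF A_proj[OF R] h(2)]])
       (use e x in \<open>auto simp: A_of_def clsU_def clsV_def\<close>)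
  then show ?thesis using x by simp
qed


lemma pair_ideal:
  fixes R (structure)
  assumes "cring R" "a \<in> carrier R" "b \<in> carrier R" "z \<in> Idl\<^bsub>R\<^esub> {a, b}"
  shows "\<exists>e1\<in>carrier R. \<exists>e2\<in>carrier R. z = e1 \<otimes>\<^bsub>R\<^esub> a \<oplus>\<^bsub>R\<^esub> e2 \<otimes>\<^bsub>R\<^esub> b"
proof -
  interpret cring R by fact
  have I: "ideal (set_add R (PIdl a) (PIdl b)) R"
    by (intro add_ideals cgenideal_ideal assms)
  have "a \<in> set_add R (PIdl a) (PIdl b)"
  proof -
    have "a = \<one> \<otimes> a \<oplus> \<zero> \<otimes> b" using assms by simp
    then show ?thesis unfolding set_add_def' cgenideal_def by blast
  qed
  moreover have "b \<in> set_add R (PIdl a) (PIdl b)"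
  proof -
    have "b = \<zero> \<otimes> a \<oplus> \<one> \<otimes> b" using assms by simp
    then show ?thesis unfolding set_add_def' cgenideal_def by blast
  qed
  ultimately have "Idl {a, b} \<subseteq> set_add R (PIdl a) (PIdl b)"
    by (intro genideal_minimal[OF I]) auto
  with assms(4) have "z \<in> set_add R (PIdl a) (PIdl b)" by blast
  then obtain h k where hk: "h \<in> PIdl a" "k \<in> PIdl b" "z = h \<oplus> k"
    unfolding set_add_def' by blast
  obtain x1 where x1: "x1 \<in> carrier R" "h = x1 \<otimes> a" using hk(1) unfolding cgenideal_def by blast
  obtain x2 where x2: "x2 \<in> carrier R" "k = x2 \<otimes> b" using hk(2) unfolding cgenideal_def by blast
  show ?thesis using x1 x2 hk(3) by blast
qed

lemma unit_pow:
  fixes S (structure)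
  assumes "cring S" "\<rho> \<in> carrier S" "\<sigma> \<in> carrier S" "x \<in> carrier S" "y \<in> carrier S"
    and e: "\<rho> \<otimes> x \<oplus> \<sigma> \<otimes> y = \<one>"
  shows "\<exists>p\<in>carrier S. \<exists>q\<in>carrier S. \<rho> [^] (n::nat) \<otimes> p \<oplus> \<sigma> \<otimes> q = \<one>"
proof (induction n)
  interpret cring S by fact
  case 0
  show ?case by (rule bexI[of _ \<one>], rule bexI[of _ \<zero>]) (use assms in auto)
next
  interpret cring S by fact
  case (Suc n)
  then obtain p q where pq: "p \<in> carrier S" "q \<in> carrier S" "\<rho> [^] n \<otimes> p \<oplus> \<sigma> \<otimes> q = \<one>" by blast
  have rn: "\<rho> [^] n \<in> carrier S" using assms by simp
  have "\<rho> [^] Suc n \<otimes> (p \<otimes> x) \<oplus> \<sigma> \<otimes> (\<rho> [^] n \<otimes> p \<otimes> y \<oplus> q)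
        = \<rho> [^] n \<otimes> p \<otimes> (\<rho> \<otimes> x \<oplus> \<sigma> \<otimes> y) \<oplus> \<sigma> \<otimes> q"
    unfolding nat_pow_Suc using rn pq(1,2) assms(2-5) by algebra
  also have "\<dots> = \<one>" using e pq rn by simp
  finally show ?case using pq assms rn by blast
qed

lemma unit_pow2:
  fixes S (structure)
  assumes "cring S" "\<rho> \<in> carrier S" "\<sigma> \<in> carrier S" "x \<in> carrier S" "y \<in> carrier S"
    and e: "\<rho> \<otimes> x \<oplus> \<sigma> \<otimes> y = \<one>"
  shows "\<exists>p\<in>carrier S. \<exists>q\<in>carrier S. \<rho> [^] (n::nat) \<otimes> p \<oplus> \<sigma> [^] (m::nat) \<otimes> q = \<one>"
proof -
  interpret cring S by fact
  obtain p q where pq: "p \<in> carrier S" "q \<in> carrier S" "\<rho> [^] n \<otimes> p \<oplus> \<sigma> \<otimes> q = \<one>"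
    using unit_pow[OF assms] by blast
  have "\<sigma> \<otimes> q \<oplus> \<rho> [^] n \<otimes> p = \<one>" using pq assms by (simp add: a_comm)
  then obtain q' p' where "q' \<in> carrier S" "p' \<in> carrier S" "\<sigma> [^] m \<otimes> q' \<oplus> \<rho> [^] n \<otimes> p' = \<one>"
    using unit_pow[OF assms(1) assms(3) _ pq(2) pq(1), of "\<rho> [^] n" m] assms by auto
  moreover have "\<rho> [^] n \<in> carrier S" "\<sigma> [^] m \<in> carrier S" using assms by auto
  ultimately show ?thesis using a_comm[of "\<sigma> [^] m \<otimes> q'" "\<rho> [^] n \<otimes> p'"] by auto
qed

lemma rad_transfer:
  assumes R: "cring R" "a \<in> carrier R" "b \<in> carrier R" "c \<in> carrier R" "d \<in> carrier R"
    and ra: "a \<in> radical R (Idl\<^bsub>R\<^esub> {c, d})" and rb: "b \<in> radical R (Idl\<^bsub>R\<^esub> {c, d})"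
    and S: "cring S" and f: "f \<in> ring_hom R S" and xy: "x \<in> carrier S" "y \<in> carrier S"
    and e: "f a \<otimes>\<^bsub>S\<^esub> x \<ominus>\<^bsub>S\<^esub> f b \<otimes>\<^bsub>S\<^esub> y = \<one>\<^bsub>S\<^esub>"
  shows "\<exists>p\<in>carrier S. \<exists>q\<in>carrier S. f c \<otimes>\<^bsub>S\<^esub> p \<ominus>\<^bsub>S\<^esub> f d \<otimes>\<^bsub>S\<^esub> q = \<one>\<^bsub>S\<^esub>"
proof -
  interpret Rr: cring R by (rule R(1))
  interpret Sc: cring S by (rule S)
  interpret fh: ring_hom_cring R S f by (intro ring_hom_cringI R(1) S f)
  obtain n where n: "a [^]\<^bsub>R\<^esub> (n::nat) \<in> Idl\<^bsub>R\<^esub> {c, d}" using ra by (auto simp: radical_def)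
  obtain m where m: "b [^]\<^bsub>R\<^esub> (m::nat) \<in> Idl\<^bsub>R\<^esub> {c, d}" using rb by (auto simp: radical_def)
  obtain e1 e2 where e12: "e1 \<in> carrier R" "e2 \<in> carrier R" "a [^]\<^bsub>R\<^esub> n = e1 \<otimes>\<^bsub>R\<^esub> c \<oplus>\<^bsub>R\<^esub> e2 \<otimes>\<^bsub>R\<^esub> d"
    using pair_ideal[OF R(1,4,5) n] by blast
  obtain e3 e4 where e34: "e3 \<in> carrier R" "e4 \<in> carrier R" "b [^]\<^bsub>R\<^esub> m = e3 \<otimes>\<^bsub>R\<^esub> c \<oplus>\<^bsub>R\<^esub> e4 \<otimes>\<^bsub>R\<^esub> d"
    using pair_ideal[OF R(1,4,5) m] by blast
  have e': "f a \<otimes>\<^bsub>S\<^esub> x \<oplus>\<^bsub>S\<^esub> f b \<otimes>\<^bsub>S\<^esub> (\<ominus>\<^bsub>S\<^esub> y) = \<one>\<^bsub>S\<^esub>"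
    using e xy R by (simp add: Sc.minus_eq Sc.r_minus)
  obtain p q where pq: "p \<in> carrier S" "q \<in> carrier S"
      "f a [^]\<^bsub>S\<^esub> n \<otimes>\<^bsub>S\<^esub> p \<oplus>\<^bsub>S\<^esub> f b [^]\<^bsub>S\<^esub> m \<otimes>\<^bsub>S\<^esub> q = \<one>\<^bsub>S\<^esub>"
    using unit_pow2[OF S _ _ xy(1) _ e', of n m] R xy by auto
  have fa: "f a [^]\<^bsub>S\<^esub> n = f e1 \<otimes>\<^bsub>S\<^esub> f c \<oplus>\<^bsub>S\<^esub> f e2 \<otimes>\<^bsub>S\<^esub> f d"
  proof -
    have "f a [^]\<^bsub>S\<^esub> n = f (a [^]\<^bsub>R\<^esub> n)" using R by simp
    also have "\<dots> = f (e1 \<otimes>\<^bsub>R\<^esub> c \<oplus>\<^bsub>R\<^esub> e2 \<otimes>\<^bsub>R\<^esub> d)" using e12(3) by simp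
    also have "\<dots> = f e1 \<otimes>\<^bsub>S\<^esub> f c \<oplus>\<^bsub>S\<^esub> f e2 \<otimes>\<^bsub>S\<^esub> f d" using e12 R by simp
    finally show ?thesis .
  qed
  have fb: "f b [^]\<^bsub>S\<^esub> m = f e3 \<otimes>\<^bsub>S\<^esub> f c \<oplus>\<^bsub>S\<^esub> f e4 \<otimes>\<^bsub>S\<^esub> f d"
  proof -
    have "f b [^]\<^bsub>S\<^esub> m = f (b [^]\<^bsub>R\<^esub> m)" using R by simp
    also have "\<dots> = f (e3 \<otimes>\<^bsub>R\<^esub> c \<oplus>\<^bsub>R\<^esub> e4 \<otimes>\<^bsub>R\<^esub> d)" using e34(3) by simp
    also have "\<dots> = f e3 \<otimes>\<^bsub>S\<^esub> f c \<oplus>\<^bsub>S\<^esub> f e4 \<otimes>\<^bsub>S\<^esub> f d" using e34 R by simp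
    finally show ?thesis .
  qed
  have cl: "f e1 \<in> carrier S" "f e2 \<in> carrier S" "f e3 \<in> carrier S" "f e4 \<in> carrier S"
    "f c \<in> carrier S" "f d \<in> carrier S" using e12 e34 R by auto
  have "f c \<otimes>\<^bsub>S\<^esub> (f e1 \<otimes>\<^bsub>S\<^esub> p \<oplus>\<^bsub>S\<^esub> f e3 \<otimes>\<^bsub>S\<^esub> q) \<ominus>\<^bsub>S\<^esub> f d \<otimes>\<^bsub>S\<^esub> (\<ominus>\<^bsub>S\<^esub> (f e2 \<otimes>\<^bsub>S\<^esub> p \<oplus>\<^bsub>S\<^esub> f e4 \<otimes>\<^bsub>S\<^esub> q))
      = (f e1 \<otimes>\<^bsub>S\<^esub> f c \<oplus>\<^bsub>S\<^esub> f e2 \<otimes>\<^bsub>S\<^esub> f d) \<otimes>\<^bsub>S\<^esub> p \<oplus>\<^bsub>S\<^esub> (f e3 \<otimes>\<^bsub>S\<^esub> f c \<oplus>\<^bsub>S\<^esub> f e4 \<otimes>\<^bsub>S\<^esub> f d) \<otimes>\<^bsub>S\<^esub> q"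
    using cl pq(1,2) by algebra
  also have "\<dots> = \<one>\<^bsub>S\<^esub>" using pq(3) fa fb by simp
  finally show ?thesis using cl pq by blast
qed


definition cT where "cT R a b = (\<lambda>c. monom (AT_ring R a b) c 0)"
definition iota where "iota R a b = cT R a b \<circ> A_of R a b"
definition Ut where "Ut R a b = cT R a b (clsU R a b)"
definition Vt where "Vt R a b = cT R a b (clsV R a b)"
definition Xt where "Xt R a b = monom (AT_ring R a b) \<one>\<^bsub>A_ring R a b\<^esub> 1"

lemma AT_cring:
  assumes "cring R" "a \<in> carrier R" "b \<in> carrier R"
  shows "cring (AT_ring R a b)"
  unfolding AT_ring_def by (rule cring_UP[OF A_cring[OF assms]])

lemma cT_hom:
  assumes "cring R" "a \<in> carrier R" "b \<in> carrier R"
  shows "cT R a b \<in> ring_hom (A_ring R a b) (AT_ring R a b)"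
  unfolding cT_def AT_ring_def by (rule const_hom[OF A_cring[OF assms]])

lemma iota_hom:
  assumes "cring R" "a \<in> carrier R" "b \<in> carrier R"
  shows "iota R a b \<in> ring_hom R (AT_ring R a b)"
  unfolding iota_def by (rule ring_hom_trans[OF A_of_hom[OF assms] cT_hom[OF assms]])

lemma iota_apply: "iota R a b x = cT R a b (A_of R a b x)"
  by (simp add: iota_def)

lemma Xt_closed:
  assumes "cring R" "a \<in> carrier R" "b \<in> carrier R"
  shows "Xt R a b \<in> carrier (AT_ring R a b)"
proof -
  interpret A: cring "A_ring R a b" by (rule A_cring[OF assms])
  show ?thesis unfolding Xt_def AT_ring_def by (rule monom_closed'[OF A.cring_axioms A.one_closed])
qed

lemma Ut_closed:
  assumes "cring R" "a \<in> carrier R" "b \<in> carrier R"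
  shows "Ut R a b \<in> carrier (AT_ring R a b)"
  unfolding Ut_def by (rule ring_hom_closed[OF cT_hom[OF assms] clsU_closed[OF assms]])

lemma Vt_closed:
  assumes "cring R" "a \<in> carrier R" "b \<in> carrier R"
  shows "Vt R a b \<in> carrier (AT_ring R a b)"
  unfolding Vt_def by (rule ring_hom_closed[OF cT_hom[OF assms] clsV_closed[OF assms]])

lemma hom_rel2:
  assumes "cring S" "cring T" "g \<in> ring_hom S T"
    "a \<in> carrier S" "p \<in> carrier S" "b \<in> carrier S" "q \<in> carrier S"
    "a \<otimes>\<^bsub>S\<^esub> p \<ominus>\<^bsub>S\<^esub> b \<otimes>\<^bsub>S\<^esub> q = \<one>\<^bsub>S\<^esub>"
  shows "g a \<otimes>\<^bsub>T\<^esub> g p \<ominus>\<^bsub>T\<^esub> g b \<otimes>\<^bsub>T\<^esub> g q = \<one>\<^bsub>T\<^esub>"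
proof -
  interpret Sc: cring S by fact
  have 1: "g (a \<otimes>\<^bsub>S\<^esub> p \<ominus>\<^bsub>S\<^esub> b \<otimes>\<^bsub>S\<^esub> q) = \<one>\<^bsub>T\<^esub>"
    by (simp only: assms(8) ring_hom_one[OF assms(3)])
  have 2: "g (a \<otimes>\<^bsub>S\<^esub> p \<ominus>\<^bsub>S\<^esub> b \<otimes>\<^bsub>S\<^esub> q) = g a \<otimes>\<^bsub>T\<^esub> g p \<ominus>\<^bsub>T\<^esub> g b \<otimes>\<^bsub>T\<^esub> g q"
    using assms(4-7) by (simp add: hom_minus[OF assms(1-3)] ring_hom_mult[OF assms(3)])
  show ?thesis using 1 2 by simp
qed

lemma AT_rel:
  assumes "cring R" "a \<in> carrier R" "b \<in> carrier R"
  shows "iota R a b a \<otimes>\<^bsub>AT_ring R a b\<^esub> Ut R a b \<ominus>\<^bsub>AT_ring R a b\<^esub> iota R a b b \<otimes>\<^bsub>AT_ring R a b\<^esub> Vt R a b = \<one>\<^bsub>AT_ring R a b\<^esub>"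
  unfolding iota_apply Ut_def Vt_def
  by (rule hom_rel2[OF A_cring[OF assms] AT_cring[OF assms] cT_hom[OF assms] _ _ _ _ A_rel[OF assms]])
     (auto intro: ring_hom_closed[OF A_of_hom[OF assms]] clsU_closed[OF assms] clsV_closed[OF assms] assms)

lemma AT_hom_eq:
  assumes R: "cring R" "a \<in> carrier R" "b \<in> carrier R" and S: "cring S"
    and h: "Phi \<in> ring_hom (AT_ring R a b) S" "Psi \<in> ring_hom (AT_ring R a b) S"
    and e: "\<And>x. x \<in> carrier R \<Longrightarrow> Phi (iota R a b x) = Psi (iota R a b x)"
      "Phi (Ut R a b) = Psi (Ut R a b)" "Phi (Vt R a b) = Psi (Vt R a b)" "Phi (Xt R a b) = Psi (Xt R a b)"
    and y: "y \<in> carrier (AT_ring R a b)"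
  shows "Phi y = Psi y"
proof -
  have inner: "Phi (monom (UP (A_ring R a b)) c 0) = Psi (monom (UP (A_ring R a b)) c 0)"
    if c: "c \<in> carrier (A_ring R a b)" for c
  proof -
    have "(Phi \<circ> cT R a b) c = (Psi \<circ> cT R a b) c"
      by (rule A_hom_eq[OF R S ring_hom_trans[OF cT_hom[OF R] h(1)] ring_hom_trans[OF cT_hom[OF R] h(2)] _ _ _ c])
         (use e in \<open>auto simp: iota_apply Ut_def Vt_def\<close>)
    then show ?thesis by (simp add: cT_def AT_ring_def)
  qed
  show ?thesis
    by (rule UP_hom_eq[OF A_cring[OF R] S h[unfolded AT_ring_def] _ _ y[unfolded AT_ring_def]])
       (use e(4) inner in \<open>auto simp: Xt_def AT_ring_def\<close>)
qed


definition good where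
  "good R r s r' s' \<alpha> \<beta> \<alpha>' \<beta>' \<longleftrightarrow> cring R \<and> r \<in> carrier R \<and> s \<in> carrier R \<and> r' \<in> carrier R \<and> s' \<in> carrier R \<and>
     \<alpha> \<in> carrier (A_ring R r s) \<and> \<beta> \<in> carrier (A_ring R r s) \<and>
     \<alpha>' \<in> carrier (A_ring R r' s') \<and> \<beta>' \<in> carrier (A_ring R r' s') \<and>
     A_of R r s r' \<otimes>\<^bsub>A_ring R r s\<^esub> \<alpha> \<ominus>\<^bsub>A_ring R r s\<^esub> A_of R r s s' \<otimes>\<^bsub>A_ring R r s\<^esub> \<beta> = \<one>\<^bsub>A_ring R r s\<^esub> \<and>
     A_of R r' s' r \<otimes>\<^bsub>A_ring R r' s'\<^esub> \<alpha>' \<ominus>\<^bsub>A_ring R r' s'\<^esub> A_of R r' s' s \<otimes>\<^bsub>A_ring R r' s'\<^esub> \<beta>' = \<one>\<^bsub>A_ring R r' s'\<^esub>"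

lemma good_sym: "good R r s r' s' \<alpha> \<beta> \<alpha>' \<beta>' \<Longrightarrow> good R r' s' r s \<alpha>' \<beta>' \<alpha> \<beta>"
  by (auto simp: good_def)

definition Phi0 where
  "Phi0 R r s r' s' \<alpha>' \<beta>' = liftA R (AT_ring R r' s') (iota R r' s')
     (cT R r' s' \<alpha>' \<oplus>\<^bsub>AT_ring R r' s'\<^esub> iota R r' s' s \<otimes>\<^bsub>AT_ring R r' s'\<^esub> Xt R r' s')
     (cT R r' s' \<beta>' \<oplus>\<^bsub>AT_ring R r' s'\<^esub> iota R r' s' r \<otimes>\<^bsub>AT_ring R r' s'\<^esub> Xt R r' s')"

definition Phi where
  "Phi R r s r' s' \<alpha> \<beta> \<alpha>' \<beta>' = eval (A_ring R r s) (AT_ring R r' s') (Phi0 R r s r' s' \<alpha>' \<beta>')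
     (Phi0 R r s r' s' \<alpha>' \<beta>' \<alpha> \<otimes>\<^bsub>AT_ring R r' s'\<^esub> Vt R r' s' \<ominus>\<^bsub>AT_ring R r' s'\<^esub>
      Phi0 R r s r' s' \<alpha>' \<beta>' \<beta> \<otimes>\<^bsub>AT_ring R r' s'\<^esub> Ut R r' s')"

lemma Phi0_props:
  assumes g: "good R r s r' s' \<alpha> \<beta> \<alpha>' \<beta>'"
  shows "Phi0 R r s r' s' \<alpha>' \<beta>' \<in> ring_hom (A_ring R r s) (AT_ring R r' s')"
    and "\<And>x. x \<in> carrier R \<Longrightarrow> Phi0 R r s r' s' \<alpha>' \<beta>' (A_of R r s x) = iota R r' s' x"
    and "Phi0 R r s r' s' \<alpha>' \<beta>' (clsU R r s) = cT R r' s' \<alpha>' \<oplus>\<^bsub>AT_ring R r' s'\<^esub> iota R r' s' s \<otimes>\<^bsub>AT_ring R r' s'\<^esub> Xt R r' s'"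
    and "Phi0 R r s r' s' \<alpha>' \<beta>' (clsV R r s) = cT R r' s' \<beta>' \<oplus>\<^bsub>AT_ring R r' s'\<^esub> iota R r' s' r \<otimes>\<^bsub>AT_ring R r' s'\<^esub> Xt R r' s'"
proof -
  have R: "cring R" "r \<in> carrier R" "s \<in> carrier R" and R': "cring R" "r' \<in> carrier R" "s' \<in> carrier R"
    and ab: "\<alpha>' \<in> carrier (A_ring R r' s')" "\<beta>' \<in> carrier (A_ring R r' s')"
    and rel: "A_of R r' s' r \<otimes>\<^bsub>A_ring R r' s'\<^esub> \<alpha>' \<ominus>\<^bsub>A_ring R r' s'\<^esub> A_of R r' s' s \<otimes>\<^bsub>A_ring R r' s'\<^esub> \<beta>' = \<one>\<^bsub>A_ring R r' s'\<^esub>"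
    using g by (auto simp: good_def)
  interpret T: cring "AT_ring R r' s'" by (rule AT_cring[OF R'])
  have cl: "iota R r' s' r \<in> carrier (AT_ring R r' s')" "iota R r' s' s \<in> carrier (AT_ring R r' s')"
    "cT R r' s' \<alpha>' \<in> carrier (AT_ring R r' s')" "cT R r' s' \<beta>' \<in> carrier (AT_ring R r' s')"
    "Xt R r' s' \<in> carrier (AT_ring R r' s')"
    using ring_hom_closed[OF iota_hom[OF R'], of r] ring_hom_closed[OF iota_hom[OF R'], of s]
      ring_hom_closed[OF cT_hom[OF R'] ab(1)] ring_hom_closed[OF cT_hom[OF R'] ab(2)] Xt_closed[OF R'] R
    by auto
  have E: "iota R r' s' r \<otimes>\<^bsub>AT_ring R r' s'\<^esub> cT R r' s' \<alpha>' \<ominus>\<^bsub>AT_ring R r' s'\<^esub> iota R r' s' s \<otimes>\<^bsub>AT_ring R r' s'\<^esub> cT R r' s' \<beta>' = \<one>\<^bsub>AT_ring R r' s'\<^esub>"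
    unfolding iota_apply
    by (rule hom_rel2[OF A_cring[OF R'] AT_cring[OF R'] cT_hom[OF R'] _ _ _ _ rel])
       (use ring_hom_closed[OF A_of_hom[OF R']] R ab in auto)
  have rel2: "iota R r' s' r \<otimes>\<^bsub>AT_ring R r' s'\<^esub> (cT R r' s' \<alpha>' \<oplus>\<^bsub>AT_ring R r' s'\<^esub> iota R r' s' s \<otimes>\<^bsub>AT_ring R r' s'\<^esub> Xt R r' s')
     \<ominus>\<^bsub>AT_ring R r' s'\<^esub> iota R r' s' s \<otimes>\<^bsub>AT_ring R r' s'\<^esub> (cT R r' s' \<beta>' \<oplus>\<^bsub>AT_ring R r' s'\<^esub> iota R r' s' r \<otimes>\<^bsub>AT_ring R r' s'\<^esub> Xt R r' s')
     = \<one>\<^bsub>AT_ring R r' s'\<^esub>"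
  proof -
    have "iota R r' s' r \<otimes>\<^bsub>AT_ring R r' s'\<^esub> (cT R r' s' \<alpha>' \<oplus>\<^bsub>AT_ring R r' s'\<^esub> iota R r' s' s \<otimes>\<^bsub>AT_ring R r' s'\<^esub> Xt R r' s')
     \<ominus>\<^bsub>AT_ring R r' s'\<^esub> iota R r' s' s \<otimes>\<^bsub>AT_ring R r' s'\<^esub> (cT R r' s' \<beta>' \<oplus>\<^bsub>AT_ring R r' s'\<^esub> iota R r' s' r \<otimes>\<^bsub>AT_ring R r' s'\<^esub> Xt R r' s')
     = iota R r' s' r \<otimes>\<^bsub>AT_ring R r' s'\<^esub> cT R r' s' \<alpha>' \<ominus>\<^bsub>AT_ring R r' s'\<^esub> iota R r' s' s \<otimes>\<^bsub>AT_ring R r' s'\<^esub> cT R r' s' \<beta>'"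
      using cl by algebra
    then show ?thesis using E by simp
  qed
  note L = liftA[OF R AT_cring[OF R'] iota_hom[OF R'] _ _ rel2]
  have uv: "cT R r' s' \<alpha>' \<oplus>\<^bsub>AT_ring R r' s'\<^esub> iota R r' s' s \<otimes>\<^bsub>AT_ring R r' s'\<^esub> Xt R r' s' \<in> carrier (AT_ring R r' s')"
    "cT R r' s' \<beta>' \<oplus>\<^bsub>AT_ring R r' s'\<^esub> iota R r' s' r \<otimes>\<^bsub>AT_ring R r' s'\<^esub> Xt R r' s' \<in> carrier (AT_ring R r' s')"
    using cl by auto
  show "Phi0 R r s r' s' \<alpha>' \<beta>' \<in> ring_hom (A_ring R r s) (AT_ring R r' s')"
    using L(1)[OF uv] by (simp add: Phi0_def)
  show "\<And>x. x \<in> carrier R \<Longrightarrow> Phi0 R r s r' s' \<alpha>' \<beta>' (A_of R r s x) = iota R r' s' x"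
    using L(2)[OF uv] by (simp add: Phi0_def)
  show "Phi0 R r s r' s' \<alpha>' \<beta>' (clsU R r s) = cT R r' s' \<alpha>' \<oplus>\<^bsub>AT_ring R r' s'\<^esub> iota R r' s' s \<otimes>\<^bsub>AT_ring R r' s'\<^esub> Xt R r' s'"
    using L(3)[OF uv] by (simp add: Phi0_def)
  show "Phi0 R r s r' s' \<alpha>' \<beta>' (clsV R r s) = cT R r' s' \<beta>' \<oplus>\<^bsub>AT_ring R r' s'\<^esub> iota R r' s' r \<otimes>\<^bsub>AT_ring R r' s'\<^esub> Xt R r' s'"
    using L(4)[OF uv] by (simp add: Phi0_def)
qed

lemma Phi_props:
  assumes g: "good R r s r' s' \<alpha> \<beta> \<alpha>' \<beta>'"
  shows "Phi R r s r' s' \<alpha> \<beta> \<alpha>' \<beta>' \<in> ring_hom (AT_ring R r s) (AT_ring R r' s')"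
    and "\<And>c. c \<in> carrier (A_ring R r s) \<Longrightarrow> Phi R r s r' s' \<alpha> \<beta> \<alpha>' \<beta>' (cT R r s c) = Phi0 R r s r' s' \<alpha>' \<beta>' c"
    and "Phi R r s r' s' \<alpha> \<beta> \<alpha>' \<beta>' (Xt R r s) = Phi0 R r s r' s' \<alpha>' \<beta>' \<alpha> \<otimes>\<^bsub>AT_ring R r' s'\<^esub> Vt R r' s' \<ominus>\<^bsub>AT_ring R r' s'\<^esub>
      Phi0 R r s r' s' \<alpha>' \<beta>' \<beta> \<otimes>\<^bsub>AT_ring R r' s'\<^esub> Ut R r' s'"
proof -
  have R: "cring R" "r \<in> carrier R" "s \<in> carrier R" and R': "cring R" "r' \<in> carrier R" "s' \<in> carrier R"
    and ab: "\<alpha> \<in> carrier (A_ring R r s)" "\<beta> \<in> carrier (A_ring R r s)"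
    using g by (auto simp: good_def)
  interpret T: cring "AT_ring R r' s'" by (rule AT_cring[OF R'])
  note h0 = Phi0_props(1)[OF g]
  have t: "Phi0 R r s r' s' \<alpha>' \<beta>' \<alpha> \<otimes>\<^bsub>AT_ring R r' s'\<^esub> Vt R r' s' \<ominus>\<^bsub>AT_ring R r' s'\<^esub>
      Phi0 R r s r' s' \<alpha>' \<beta>' \<beta> \<otimes>\<^bsub>AT_ring R r' s'\<^esub> Ut R r' s' \<in> carrier (AT_ring R r' s')"
    using ring_hom_closed[OF h0 ab(1)] ring_hom_closed[OF h0 ab(2)] Ut_closed[OF R'] Vt_closed[OF R'] by auto
  note E = UP_eval_hom[OF A_cring[OF R] AT_cring[OF R'] h0 t]
  show "Phi R r s r' s' \<alpha> \<beta> \<alpha>' \<beta>' \<in> ring_hom (AT_ring R r s) (AT_ring R r' s')"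
    using E(1) by (simp add: Phi_def AT_ring_def)
  show "\<And>c. c \<in> carrier (A_ring R r s) \<Longrightarrow> Phi R r s r' s' \<alpha> \<beta> \<alpha>' \<beta>' (cT R r s c) = Phi0 R r s r' s' \<alpha>' \<beta>' c"
    using E(2) by (simp add: Phi_def AT_ring_def cT_def)
  show "Phi R r s r' s' \<alpha> \<beta> \<alpha>' \<beta>' (Xt R r s) = Phi0 R r s r' s' \<alpha>' \<beta>' \<alpha> \<otimes>\<^bsub>AT_ring R r' s'\<^esub> Vt R r' s' \<ominus>\<^bsub>AT_ring R r' s'\<^esub>
      Phi0 R r s r' s' \<alpha>' \<beta>' \<beta> \<otimes>\<^bsub>AT_ring R r' s'\<^esub> Ut R r' s'"
    using E(3) by (simp add: Phi_def AT_ring_def Xt_def)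
qed


lemma alg_b:
  fixes T (structure)
  assumes "cring T" "p \<in> carrier T" "q \<in> carrier T" "U \<in> carrier T" "V \<in> carrier T" "\<rho> \<in> carrier T" "\<sigma> \<in> carrier T"
    and E1: "\<rho> \<otimes> U \<ominus> \<sigma> \<otimes> V = \<one>" and E2: "\<rho> \<otimes> p \<ominus> \<sigma> \<otimes> q = \<one>"
  shows "p \<oplus> \<sigma> \<otimes> (p \<otimes> V \<ominus> q \<otimes> U) = U"
proof -
  interpret cring T by fact
  have "p \<oplus> \<sigma> \<otimes> (p \<otimes> V \<ominus> q \<otimes> U) = p \<otimes> (\<one> \<ominus> (\<rho> \<otimes> U \<ominus> \<sigma> \<otimes> V)) \<oplus> U \<otimes> (\<rho> \<otimes> p \<ominus> \<sigma> \<otimes> q)"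
    using assms(2-7) by algebra
  also have "\<dots> = p \<otimes> (\<one> \<ominus> \<one>) \<oplus> U \<otimes> \<one>" by (simp only: E1 E2)
  also have "\<dots> = U" using assms(2-7) by algebra
  finally show ?thesis .
qed

lemma alg_c:
  fixes T (structure)
  assumes "cring T" "p \<in> carrier T" "q \<in> carrier T" "U \<in> carrier T" "V \<in> carrier T" "\<rho> \<in> carrier T" "\<sigma> \<in> carrier T"
    and E1: "\<rho> \<otimes> U \<ominus> \<sigma> \<otimes> V = \<one>" and E2: "\<rho> \<otimes> p \<ominus> \<sigma> \<otimes> q = \<one>"
  shows "q \<oplus> \<rho> \<otimes> (p \<otimes> V \<ominus> q \<otimes> U) = V"
proof -
  interpret cring T by fact
  have "q \<oplus> \<rho> \<otimes> (p \<otimes> V \<ominus> q \<otimes> U) = q \<otimes> (\<one> \<ominus> (\<rho> \<otimes> U \<ominus> \<sigma> \<otimes> V)) \<oplus> V \<otimes> (\<rho> \<otimes> p \<ominus> \<sigma> \<otimes> q)"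
    using assms(2-7) by algebra
  also have "\<dots> = q \<otimes> (\<one> \<ominus> \<one>) \<oplus> V \<otimes> \<one>" by (simp only: E1 E2)
  also have "\<dots> = V" using assms(2-7) by algebra
  finally show ?thesis .
qed

lemma alg_d:
  fixes T (structure)
  assumes "cring T" "a \<in> carrier T" "b \<in> carrier T" "Z \<in> carrier T" "\<rho> \<in> carrier T" "\<sigma> \<in> carrier T"
    and E: "\<rho> \<otimes> a \<ominus> \<sigma> \<otimes> b = \<one>"
  shows "a \<otimes> (b \<oplus> \<rho> \<otimes> Z) \<ominus> b \<otimes> (a \<oplus> \<sigma> \<otimes> Z) = Z"
proof -
  interpret cring T by fact
  have "a \<otimes> (b \<oplus> \<rho> \<otimes> Z) \<ominus> b \<otimes> (a \<oplus> \<sigma> \<otimes> Z) = Z \<otimes> (\<rho> \<otimes> a \<ominus> \<sigma> \<otimes> b)"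
    using assms(2-6) by algebra
  also have "\<dots> = Z" using E assms(4) by simp
  finally show ?thesis .
qed

lemma good_basics:
  assumes "good R r s r' s' \<alpha> \<beta> \<alpha>' \<beta>'"
  shows "cring R" "r \<in> carrier R" "s \<in> carrier R" "r' \<in> carrier R" "s' \<in> carrier R"
    "\<alpha> \<in> carrier (A_ring R r s)" "\<beta> \<in> carrier (A_ring R r s)"
    "\<alpha>' \<in> carrier (A_ring R r' s')" "\<beta>' \<in> carrier (A_ring R r' s')"
    "A_of R r s r' \<otimes>\<^bsub>A_ring R r s\<^esub> \<alpha> \<ominus>\<^bsub>A_ring R r s\<^esub> A_of R r s s' \<otimes>\<^bsub>A_ring R r s\<^esub> \<beta> = \<one>\<^bsub>A_ring R r s\<^esub>"
    "A_of R r' s' r \<otimes>\<^bsub>A_ring R r' s'\<^esub> \<alpha>' \<ominus>\<^bsub>A_ring R r' s'\<^esub> A_of R r' s' s \<otimes>\<^bsub>A_ring R r' s'\<^esub> \<beta>' = \<one>\<^bsub>A_ring R r' s'\<^esub>"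
  using assms by (auto simp: good_def)

lemma Phi_iota:
  assumes g: "good R r s r' s' \<alpha> \<beta> \<alpha>' \<beta>'" and x: "x \<in> carrier R"
  shows "Phi R r s r' s' \<alpha> \<beta> \<alpha>' \<beta>' (iota R r s x) = iota R r' s' x"
proof -
  note b = good_basics[OF g]
  have "A_of R r s x \<in> carrier (A_ring R r s)" by (rule ring_hom_closed[OF A_of_hom[OF b(1-3)] x])
  then show ?thesis unfolding iota_apply
    using Phi_props(2)[OF g] Phi0_props(2)[OF g x] by (simp add: iota_apply)
qed

lemma Phi_Ut:
  assumes g: "good R r s r' s' \<alpha> \<beta> \<alpha>' \<beta>'"
  shows "Phi R r s r' s' \<alpha> \<beta> \<alpha>' \<beta>' (Ut R r s) = cT R r' s' \<alpha>' \<oplus>\<^bsub>AT_ring R r' s'\<^esub> iota R r' s' s \<otimes>\<^bsub>AT_ring R r' s'\<^esub> Xt R r' s'"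
proof -
  note b = good_basics[OF g]
  show ?thesis unfolding Ut_def
    using Phi_props(2)[OF g clsU_closed[OF b(1-3)]] Phi0_props(3)[OF g] by simp
qed

lemma Phi_Vt:
  assumes g: "good R r s r' s' \<alpha> \<beta> \<alpha>' \<beta>'"
  shows "Phi R r s r' s' \<alpha> \<beta> \<alpha>' \<beta>' (Vt R r s) = cT R r' s' \<beta>' \<oplus>\<^bsub>AT_ring R r' s'\<^esub> iota R r' s' r \<otimes>\<^bsub>AT_ring R r' s'\<^esub> Xt R r' s'"
proof -
  note b = good_basics[OF g]
  show ?thesis unfolding Vt_def
    using Phi_props(2)[OF g clsV_closed[OF b(1-3)]] Phi0_props(4)[OF g] by simp
qed

lemma Phi_inv:
  assumes g: "good R r s r' s' \<alpha> \<beta> \<alpha>' \<beta>'" and y: "y \<in> carrier (AT_ring R r s)"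
  shows "Phi R r' s' r s \<alpha>' \<beta>' \<alpha> \<beta> (Phi R r s r' s' \<alpha> \<beta> \<alpha>' \<beta>' y) = y"
proof -
  note b = good_basics[OF g]
  have g': "good R r' s' r s \<alpha>' \<beta>' \<alpha> \<beta>" by (rule good_sym[OF g])
  note R = b(1-3) and R' = b(1,4,5)
  let ?T = "AT_ring R r s" and ?T' = "AT_ring R r' s'"
  let ?P = "Phi R r s r' s' \<alpha> \<beta> \<alpha>' \<beta>'" and ?Q = "Phi R r' s' r s \<alpha>' \<beta>' \<alpha> \<beta>"
  let ?Pz = "Phi0 R r s r' s' \<alpha>' \<beta>'" and ?Qz = "Phi0 R r' s' r s \<alpha> \<beta>"
  have Tc: "cring ?T" by (rule AT_cring[OF R])
  have T'c: "cring ?T'" by (rule AT_cring[OF R'])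
  interpret T': cring ?T' by (rule T'c)
  interpret T: cring ?T by (rule Tc)
  note Ph = Phi_props(1)[OF g] and Qh = Phi_props(1)[OF g']
  note P0h = Phi0_props(1)[OF g] and Q0h = Phi0_props(1)[OF g']
  have clT: "iota R r s x \<in> carrier ?T" if "x \<in> carrier R" for x
    using ring_hom_closed[OF iota_hom[OF R] that] .
  have clT': "iota R r' s' x \<in> carrier ?T'" if "x \<in> carrier R" for x
    using ring_hom_closed[OF iota_hom[OF R'] that] .
  have p: "?Qz \<alpha>' \<in> carrier ?T" "?Qz \<beta>' \<in> carrier ?T"
    using ring_hom_closed[OF Q0h b(8)] ring_hom_closed[OF Q0h b(9)] by auto
  have E1: "iota R r s r \<otimes>\<^bsub>?T\<^esub> Ut R r s \<ominus>\<^bsub>?T\<^esub> iota R r s s \<otimes>\<^bsub>?T\<^esub> Vt R r s = \<one>\<^bsub>?T\<^esub>"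
    by (rule AT_rel[OF R])
  have E2: "iota R r s r \<otimes>\<^bsub>?T\<^esub> ?Qz \<alpha>' \<ominus>\<^bsub>?T\<^esub> iota R r s s \<otimes>\<^bsub>?T\<^esub> ?Qz \<beta>' = \<one>\<^bsub>?T\<^esub>"
    using hom_rel2[OF A_cring[OF R'] Tc Q0h _ b(8) _ b(9) b(11)]
      ring_hom_closed[OF A_of_hom[OF R']] Phi0_props(2)[OF g'] R by simp
  have E3: "iota R r s r' \<otimes>\<^bsub>?T\<^esub> cT R r s \<alpha> \<ominus>\<^bsub>?T\<^esub> iota R r s s' \<otimes>\<^bsub>?T\<^esub> cT R r s \<beta> = \<one>\<^bsub>?T\<^esub>"
    unfolding iota_apply
    using hom_rel2[OF A_cring[OF R] Tc cT_hom[OF R] _ b(6) _ b(7) b(10)]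
      ring_hom_closed[OF A_of_hom[OF R]] b(4,5) by simp
  have QX': "?Q (Xt R r' s') = ?Qz \<alpha>' \<otimes>\<^bsub>?T\<^esub> Vt R r s \<ominus>\<^bsub>?T\<^esub> ?Qz \<beta>' \<otimes>\<^bsub>?T\<^esub> Ut R r s"
    by (rule Phi_props(3)[OF g'])
  have UV: "Ut R r s \<in> carrier ?T" "Vt R r s \<in> carrier ?T" "Xt R r s \<in> carrier ?T"
    using Ut_closed[OF R] Vt_closed[OF R] Xt_closed[OF R] .
  have UV': "Ut R r' s' \<in> carrier ?T'" "Vt R r' s' \<in> carrier ?T'" "Xt R r' s' \<in> carrier ?T'"
    using Ut_closed[OF R'] Vt_closed[OF R'] Xt_closed[OF R'] .
  have ca: "cT R r' s' \<alpha>' \<in> carrier ?T'" "cT R r' s' \<beta>' \<in> carrier ?T'"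
    using ring_hom_closed[OF cT_hom[OF R'] b(8)] ring_hom_closed[OF cT_hom[OF R'] b(9)] by auto
  have Qc: "?Q (cT R r' s' c) = ?Qz c" if "c \<in> carrier (A_ring R r' s')" for c
    using Phi_props(2)[OF g' that] .
  have ga: "?Q (?P (iota R r s x)) = iota R r s x" if x: "x \<in> carrier R" for x
    using Phi_iota[OF g x] Phi_iota[OF g' x] by simp
  have gb: "?Q (?P (Ut R r s)) = Ut R r s"
  proof -
    have "?Q (?P (Ut R r s)) = ?Qz \<alpha>' \<oplus>\<^bsub>?T\<^esub> iota R r s s \<otimes>\<^bsub>?T\<^esub>
        (?Qz \<alpha>' \<otimes>\<^bsub>?T\<^esub> Vt R r s \<ominus>\<^bsub>?T\<^esub> ?Qz \<beta>' \<otimes>\<^bsub>?T\<^esub> Ut R r s)"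
      using ring_hom_add[OF Qh] ring_hom_mult[OF Qh] ca clT' UV' R Phi_Ut[OF g] Qc[OF b(8)] Phi_iota[OF g'] QX'
      by (simp add: T'.m_closed)
    also have "\<dots> = Ut R r s"
      by (rule alg_b[OF Tc p UV(1,2) clT clT E1 E2]) (use R in auto)
    finally show ?thesis .
  qed
  have gc: "?Q (?P (Vt R r s)) = Vt R r s"
  proof -
    have "?Q (?P (Vt R r s)) = ?Qz \<beta>' \<oplus>\<^bsub>?T\<^esub> iota R r s r \<otimes>\<^bsub>?T\<^esub>
        (?Qz \<alpha>' \<otimes>\<^bsub>?T\<^esub> Vt R r s \<ominus>\<^bsub>?T\<^esub> ?Qz \<beta>' \<otimes>\<^bsub>?T\<^esub> Ut R r s)"
      using ring_hom_add[OF Qh] ring_hom_mult[OF Qh] ca clT' UV' R Phi_Vt[OF g] Qc[OF b(9)] Phi_iota[OF g'] QX'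
      by (simp add: T'.m_closed)
    also have "\<dots> = Vt R r s"
      by (rule alg_c[OF Tc p UV(1,2) clT clT E1 E2]) (use R in auto)
    finally show ?thesis .
  qed
  have QP0: "?Q (?Pz c) = cT R r s c" if c: "c \<in> carrier (A_ring R r s)" for c
  proof -
    have "(?Q \<circ> ?Pz) c = cT R r s c"
    proof (rule A_hom_eq[OF R Tc ring_hom_trans[OF P0h Qh] cT_hom[OF R] _ _ _ c])
      show "\<And>x. x \<in> carrier R \<Longrightarrow> (?Q \<circ> ?Pz) (A_of R r s x) = cT R r s (A_of R r s x)"
        using Phi0_props(2)[OF g] Phi_iota[OF g'] by (simp add: iota_apply)
      show "(?Q \<circ> ?Pz) (clsU R r s) = cT R r s (clsU R r s)"
        using gb Phi_props(2)[OF g clsU_closed[OF R]] by (simp add: Ut_def)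
      show "(?Q \<circ> ?Pz) (clsV R r s) = cT R r s (clsV R r s)"
        using gc Phi_props(2)[OF g clsV_closed[OF R]] by (simp add: Vt_def)
    qed
    then show ?thesis by simp
  qed
  have gd: "?Q (?P (Xt R r s)) = Xt R r s"
  proof -
    have c0: "?Pz \<alpha> \<in> carrier ?T'" "?Pz \<beta> \<in> carrier ?T'"
      using ring_hom_closed[OF P0h b(6)] ring_hom_closed[OF P0h b(7)] by auto
    have "?Q (?P (Xt R r s)) = ?Q (?Pz \<alpha>) \<otimes>\<^bsub>?T\<^esub> ?Q (Vt R r' s') \<ominus>\<^bsub>?T\<^esub> ?Q (?Pz \<beta>) \<otimes>\<^bsub>?T\<^esub> ?Q (Ut R r' s')"
      using Phi_props(3)[OF g] hom_minus[OF T'c Tc Qh] ring_hom_mult[OF Qh] c0 UV' by (simp add: T'.m_closed)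
    also have "\<dots> = cT R r s \<alpha> \<otimes>\<^bsub>?T\<^esub> (cT R r s \<beta> \<oplus>\<^bsub>?T\<^esub> iota R r s r' \<otimes>\<^bsub>?T\<^esub> Xt R r s)
        \<ominus>\<^bsub>?T\<^esub> cT R r s \<beta> \<otimes>\<^bsub>?T\<^esub> (cT R r s \<alpha> \<oplus>\<^bsub>?T\<^esub> iota R r s s' \<otimes>\<^bsub>?T\<^esub> Xt R r s)"
      using QP0[OF b(6)] QP0[OF b(7)] Phi_Vt[OF g'] Phi_Ut[OF g'] by simp
    also have "\<dots> = Xt R r s"
      by (rule alg_d[OF Tc _ _ UV(3) clT clT E3])
         (use ring_hom_closed[OF cT_hom[OF R] b(6)] ring_hom_closed[OF cT_hom[OF R] b(7)] b in auto)
    finally show ?thesis .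
  qed
  have "(?Q \<circ> ?P) y = id y"
    by (rule AT_hom_eq[OF R Tc ring_hom_trans[OF Ph Qh] id_ring_hom _ _ _ _ y])
       (use ga gb gc gd in auto)
  then show ?thesis by simp
qed


lemma self_radical:
  fixes R (structure)
  assumes "cring R" "a \<in> carrier R" "b \<in> carrier R"
  shows "a \<in> radical R (Idl {a, b})" "b \<in> radical R (Idl {a, b})"
proof -
  interpret cring R by fact
  have sub: "{a, b} \<subseteq> Idl {a, b}" by (rule genideal_self) (use assms in auto)
  have "a [^] (Suc 0) = a" "b [^] (Suc 0) = b" using assms by auto
  then show "a \<in> radical R (Idl {a, b})" "b \<in> radical R (Idl {a, b})"
    unfolding radical_def using sub assms by (metis (mono_tags, lifting) insert_subset mem_Collect_eq)+
qed

lemma AT_struct_iota: "AT_struct R \<phi> a b z = iota R a b (\<phi> z)"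
  by (simp add: AT_struct_def iota_apply cT_def)

theorem mainTheorem4:
  fixes R :: "('a, 'b) ring_scheme" and \<phi> :: "complex \<Rightarrow> 'a"
    and r s r' s' :: 'a
  assumes "domain R"
    and "fg_C_algebra R \<phi>"
    and "r \<in> carrier R" "s \<in> carrier R" "r' \<in> carrier R" "s' \<in> carrier R"
    and "radical R (Idl\<^bsub>R\<^esub> {r, s}) = radical R (Idl\<^bsub>R\<^esub> {r', s'})"
  shows "C_alg_iso (AT_ring R r s) (AT_struct R \<phi> r s) (AT_ring R r' s') (AT_struct R \<phi> r' s')"
proof -
  have cR: "cring R" and hphi: "\<phi> \<in> ring_hom complex_ring R"
    using assms(2) by (auto simp: fg_C_algebra_def)
  note R = cR assms(3,4) and R' = cR assms(5,6)
  have phic: "\<phi> z \<in> carrier R" for z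
    using ring_hom_closed[OF hphi] by (simp add: complex_ring_def)
  have r1: "r \<in> radical R (Idl\<^bsub>R\<^esub> {r', s'})" "s \<in> radical R (Idl\<^bsub>R\<^esub> {r', s'})"
    using self_radical[OF R] assms(7) by auto
  have r2: "r' \<in> radical R (Idl\<^bsub>R\<^esub> {r, s})" "s' \<in> radical R (Idl\<^bsub>R\<^esub> {r, s})"
    using self_radical[OF R'] assms(7) by auto
  obtain \<alpha> \<beta> where ab: "\<alpha> \<in> carrier (A_ring R r s)" "\<beta> \<in> carrier (A_ring R r s)"
    "A_of R r s r' \<otimes>\<^bsub>A_ring R r s\<^esub> \<alpha> \<ominus>\<^bsub>A_ring R r s\<^esub> A_of R r s s' \<otimes>\<^bsub>A_ring R r s\<^esub> \<beta> = \<one>\<^bsub>A_ring R r s\<^esub>"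
    using rad_transfer[OF cR assms(3-6) r1 A_cring[OF R] A_of_hom[OF R] clsU_closed[OF R] clsV_closed[OF R] A_rel[OF R]]
    by blast
  obtain \<alpha>' \<beta>' where ab': "\<alpha>' \<in> carrier (A_ring R r' s')" "\<beta>' \<in> carrier (A_ring R r' s')"
    "A_of R r' s' r \<otimes>\<^bsub>A_ring R r' s'\<^esub> \<alpha>' \<ominus>\<^bsub>A_ring R r' s'\<^esub> A_of R r' s' s \<otimes>\<^bsub>A_ring R r' s'\<^esub> \<beta>' = \<one>\<^bsub>A_ring R r' s'\<^esub>"
    using rad_transfer[OF cR assms(5,6,3,4) r2 A_cring[OF R'] A_of_hom[OF R'] clsU_closed[OF R'] clsV_closed[OF R'] A_rel[OF R']]
    by blast
  have g: "good R r s r' s' \<alpha> \<beta> \<alpha>' \<beta>'"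
    unfolding good_def using R R' ab ab' by auto
  have g': "good R r' s' r s \<alpha>' \<beta>' \<alpha> \<beta>" by (rule good_sym[OF g])
  let ?P = "Phi R r s r' s' \<alpha> \<beta> \<alpha>' \<beta>'" and ?Q = "Phi R r' s' r s \<alpha>' \<beta>' \<alpha> \<beta>"
  have bij: "bij_betw ?P (carrier (AT_ring R r s)) (carrier (AT_ring R r' s'))"
    by (rule bij_betw_byWitness[where f' = ?Q])
       (use Phi_inv[OF g] Phi_inv[OF g'] ring_hom_closed[OF Phi_props(1)[OF g]] ring_hom_closed[OF Phi_props(1)[OF g']] in auto)
  have iso: "?P \<in> ring_iso (AT_ring R r s) (AT_ring R r' s')"
    unfolding ring_iso_def using Phi_props(1)[OF g] bij by simp
  have "\<forall>z. ?P (AT_struct R \<phi> r s z) = AT_struct R \<phi> r' s' z"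
    using Phi_iota[OF g phic] by (simp add: AT_struct_iota)
  then show ?thesis unfolding C_alg_iso_def using iso by blast
qed


end
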